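(* Consider the finite game with players $\mathcal{M}=\{1,\dots,M\}$, common action set $\mathcal{N}$ and costs $c_i(\mathbf{a}) = \frac{\sigma^2}{h_{ia_i}}\,\frac{\beta_i}{[1-\sum_{l\in\mathcal{M}_{a_i}(\mathbf{a})}\beta_l]^+}$. If this game contains no best response cycles, then the algorithm MAPC$^\ast$, started from any initial association profile, converges in a finite number of steps (i.e., after finitely many steps the association profile no longer changes).
   Context: Uplink cellular model: mobiles $\mathcal{M}=\{1,\dots,M\}$, BSs $\mathcal{N}=\{1,\dots,N\}$, power gains $h_{ij}>0$, noise power $\sigma^2>0$, target SINRs $\gamma_i>0$, $\beta_i=\gamma_i/(1+\gamma_i)$. Association profile $\mathbf{a}\in\mathcal{N}^M$, $\mathcal{M}_j(\mathbf{a})=\{l: a_l=j\}$, $[x]^+=\max(x,0)$, positive$/0=+\infty$; $(b,\mathbf{a}_{-i})$ replaces $a_i$ by $b$. A best response path is a sequence of profiles $\mathbf{a}^1,\dots,\mathbf{a}^k$ where each $\mathbf{a}^{r+1}=(b,\mathbf{a}^r_{-i})$ for some player $i$ and some $b\in\arg\min_{b'\in\mathcal{N}}c_i(b',\mathbf{a}^r_{-i})$; a best response cycle is such a path with $\mathbf{a}^1=\mathbf{a}^k$ in which, for at least one step, the deviating player strictly decreases its cost. Algorithm MAPC$^\ast$: at times $t=0,1,2,\dots$, mobile $i=1+(t\bmod M)$ changes its association at $t+1$ iff $a_i(t)\notin\arg\min_{j\in\mathcal{N}}\big(c_i(j,\mathbf{a}(t)_{-i}),\ \sum_{l\in\mathcal{M}_j((j,\mathbf{a}(t)_{-i}))}\beta_l\big)$,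 the minimization being with respect to lexicographic order on pairs; in that case $a_i(t+1)$ is chosen in this lexicographic argmin and all other associations are unchanged. *)

theory Defs
  imports Complex_Main "HOL-Library.FuncSet" "HOL-Library.Extended_Real"
begin

text \<open>Mobiles are 1..M, base stations 1..N. An association profile is an
extensional function in PiE {1..M} (\<lambda>_. {1..N}).
h i j is the power gain, sigma2 the noise power sigma^2, gamma i the target SINR.\<close>

definition beta :: "(nat \<Rightarrow> real) \<Rightarrow> nat \<Rightarrow> real" where
  "beta gamma i = gamma i / (1 + gamma i)"

definition profiles :: "nat \<Rightarrow> nat \<Rightarrow> (nat \<Rightarrow> nat) set" where
  "profiles M N = PiE {1..M} (\<lambda>_. {1..N})"

definition assoc :: "nat \<Rightarrow> (nat \<Rightarrow> nat) \<Rightarrow> nat \<Rightarrow> nat set" where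
  "assoc M a j = {l \<in> {1..M}. a l = j}"

definition load :: "nat \<Rightarrow> (nat \<Rightarrow> real) \<Rightarrow> (nat \<Rightarrow> nat) \<Rightarrow> nat \<Rightarrow> real" where
  "load M gamma a j = (\<Sum>l\<in>assoc M a j. beta gamma l)"

definition cost :: "nat \<Rightarrow> real \<Rightarrow> (nat \<Rightarrow> nat \<Rightarrow> real) \<Rightarrow> (nat \<Rightarrow> real)
                      \<Rightarrow> nat \<Rightarrow> (nat \<Rightarrow> nat) \<Rightarrow> ereal" where
  "cost M sigma2 h gamma i a =
     (let d = max (1 - load M gamma a (a i)) 0 in
      if d > 0 then ereal (sigma2 / h i (a i) * beta gamma i / d) else \<infinity>)"

definition best_response ::
  "nat \<Rightarrow> nat \<Rightarrow> real \<Rightarrow> (nat \<Rightarrow> nat \<Rightarrow> real) \<Rightarrow> (nat \<Rightarrow> real)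
     \<Rightarrow> nat \<Rightarrow> (nat \<Rightarrow> nat) \<Rightarrow> nat \<Rightarrow> bool" where
  "best_response M N sigma2 h gamma i a b \<longleftrightarrow>
     b \<in> {1..N} \<and>
     (\<forall>b'\<in>{1..N}. cost M sigma2 h gamma i (a(i := b)) \<le> cost M sigma2 h gamma i (a(i := b')))"

definition br_step ::
  "nat \<Rightarrow> nat \<Rightarrow> real \<Rightarrow> (nat \<Rightarrow> nat \<Rightarrow> real) \<Rightarrow> (nat \<Rightarrow> real)
     \<Rightarrow> nat \<Rightarrow> (nat \<Rightarrow> nat) \<Rightarrow> (nat \<Rightarrow> nat) \<Rightarrow> bool" where
  "br_step M N sigma2 h gamma i a a' \<longleftrightarrow>
     i \<in> {1..M} \<and> (\<exists>b. best_response M N sigma2 h gamma i a b \<and> a' = a(i := b))"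

definition has_br_cycle ::
  "nat \<Rightarrow> nat \<Rightarrow> real \<Rightarrow> (nat \<Rightarrow> nat \<Rightarrow> real) \<Rightarrow> (nat \<Rightarrow> real) \<Rightarrow> bool" where
  "has_br_cycle M N sigma2 h gamma \<longleftrightarrow>
     (\<exists>(p :: nat \<Rightarrow> nat \<Rightarrow> nat) (k::nat) (pl :: nat \<Rightarrow> nat).
        k \<ge> 1 \<and> p 0 \<in> profiles M N \<and> p k = p 0 \<and>
        (\<forall>r<k. br_step M N sigma2 h gamma (pl r) (p r) (p (Suc r))) \<and>
        (\<exists>r<k. cost M sigma2 h gamma (pl r) (p (Suc r)) < cost M sigma2 h gamma (pl r) (p r)))"

definition lex_le :: "ereal \<times> real \<Rightarrow> ereal \<times> real \<Rightarrow> bool" where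
  "lex_le x y \<longleftrightarrow> fst x < fst y \<or> (fst x = fst y \<and> snd x \<le> snd y)"

definition mapc_key ::
  "nat \<Rightarrow> real \<Rightarrow> (nat \<Rightarrow> nat \<Rightarrow> real) \<Rightarrow> (nat \<Rightarrow> real)
     \<Rightarrow> nat \<Rightarrow> (nat \<Rightarrow> nat) \<Rightarrow> nat \<Rightarrow> ereal \<times> real" where
  "mapc_key M sigma2 h gamma i a j =
     (cost M sigma2 h gamma i (a(i := j)), load M gamma (a(i := j)) j)"

definition lex_argmin ::
  "nat \<Rightarrow> nat \<Rightarrow> real \<Rightarrow> (nat \<Rightarrow> nat \<Rightarrow> real) \<Rightarrow> (nat \<Rightarrow> real)
     \<Rightarrow> nat \<Rightarrow> (nat \<Rightarrow> nat) \<Rightarrow> nat set" where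
  "lex_argmin M N sigma2 h gamma i a =
     {j \<in> {1..N}. \<forall>j'\<in>{1..N}. lex_le (mapc_key M sigma2 h gamma i a j)
                                      (mapc_key M sigma2 h gamma i a j')}"

definition mapc_run ::
  "nat \<Rightarrow> nat \<Rightarrow> real \<Rightarrow> (nat \<Rightarrow> nat \<Rightarrow> real) \<Rightarrow> (nat \<Rightarrow> real)
     \<Rightarrow> (nat \<Rightarrow> nat \<Rightarrow> nat) \<Rightarrow> bool" where
  "mapc_run M N sigma2 h gamma a \<longleftrightarrow>
     a 0 \<in> profiles M N \<and>
     (\<forall>t. let i = 1 + t mod M in
        (if a t i \<in> lex_argmin M N sigma2 h gamma i (a t) then a (Suc t) = a t
         else (\<exists>b\<in>lex_argmin M N sigma2 h gamma i (a t). a (Suc t) = (a t)(i := b))))"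

end

theory Submission
  imports Defs
begin

definition pot :: "nat \<Rightarrow> nat \<Rightarrow> (nat \<Rightarrow> real) \<Rightarrow> (nat \<Rightarrow> nat) \<Rightarrow> real" where
  "pot M N gamma a = (\<Sum>j\<in>{1..N}. (load M gamma a j)^2)"

lemma upd_profiles:
  assumes "p \<in> profiles M N" "i \<in> {1..M}" "b \<in> {1..N}"
  shows "p(i := b) \<in> profiles M N"
  using assms PiE_fun_upd[of b "\<lambda>_. {1..N}" i p "{1..M}"]
  by (simp add: profiles_def insert_absorb)

lemma load_upd:
  assumes "a i = c" "c \<noteq> b" "i \<in> {1..M}"
  shows "load M gamma (a(i:=b)) j = load M gamma a j
     + (if j = b then beta gamma i else 0) - (if j = c then beta gamma i else 0)"
proof -
  have fin: "finite (assoc M a j)" by (simp add: assoc_def)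
  consider "j = b" | "j = c" | "j \<noteq> b" "j \<noteq> c" by blast
  then show ?thesis
  proof cases
    case 1
    then have "assoc M (a(i:=b)) j = insert i (assoc M a j)" "i \<notin> assoc M a j"
      using assms by (auto simp: assoc_def)
    then show ?thesis using 1 fin assms by (simp add: load_def)
  next
    case 2
    then have e: "assoc M (a(i:=b)) j = assoc M a j - {i}" "i \<in> assoc M a j"
      using assms by (auto simp: assoc_def)
    have "load M gamma a j = beta gamma i + load M gamma (a(i:=b)) j"
      unfolding load_def e(1) using sum.remove[OF fin e(2)] by simp
    then show ?thesis using 2 assms by simp
  next
    case 3
    then have "assoc M (a(i:=b)) j = assoc M a j"
      using assms by (auto simp: assoc_def)
    then show ?thesis using 3 by (simp add: load_def)
  qed
qed

lemma pot_decr: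
  assumes "a i = c" "c \<noteq> b" "i \<in> {1..M}" "b \<in> {1..N}" "c \<in> {1..N}"
    and "beta gamma i > 0"
    and "load M gamma (a(i:=b)) b < load M gamma a c"
  shows "pot M N gamma (a(i:=b)) < pot M N gamma a"
proof -
  define g where "g j = (load M gamma (a(i:=b)) j)^2 - (load M gamma a j)^2" for j
  have "pot M N gamma (a(i:=b)) - pot M N gamma a = (\<Sum>j\<in>{1..N}. g j)"
    by (simp add: pot_def g_def sum_subtractf)
  also have "\<dots> = (\<Sum>j\<in>{b,c}. g j)"
    apply (rule sum.mono_neutral_right)
    using assms by (auto simp: g_def load_upd[where a=a and i=i and c=c and b=b and M=M, OF assms(1-3)])
  also have "\<dots> = g b + g c" using assms by simp
  also have "\<dots> = 2 * beta gamma i * (load M gamma (a(i:=b)) b - load M gamma a c)"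
    using assms by (simp add: g_def load_upd[where a=a and i=i and c=c and b=b and M=M, OF assms(1-3)] power2_eq_square algebra_simps)
  also have "\<dots> < 0" using assms by (simp add: mult_pos_neg)
  finally show ?thesis by simp
qed

lemma argmin_br:
  assumes "j \<in> lex_argmin M N sigma2 h gamma i a"
  shows "best_response M N sigma2 h gamma i a j"
  using assms unfolding lex_argmin_def best_response_def lex_le_def mapc_key_def
  by (auto simp: order_le_less)

lemma run_profiles:
  assumes "M \<ge> 1" "mapc_run M N sigma2 h gamma a"
  shows "a t \<in> profiles M N"
proof (induction t)
  case 0 then show ?case using assms by (simp add: mapc_run_def)
next
  case (Suc t)
  define i where "i = 1 + t mod M"
  have i: "i \<in> {1..M}" using assms(1) unfolding i_def
    by (simp add: Suc_leI)
  have r: "if a t i \<in> lex_argmin M N sigma2 h gamma i (a t) then a (Suc t) = a t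
         else (\<exists>b\<in>lex_argmin M N sigma2 h gamma i (a t). a (Suc t) = (a t)(i := b))"
    using assms(2) unfolding mapc_run_def i_def Let_def by blast
  show ?case
  proof (cases "a t i \<in> lex_argmin M N sigma2 h gamma i (a t)")
    case True then show ?thesis using r Suc by simp
  next
    case False
    then obtain b where "b \<in> lex_argmin M N sigma2 h gamma i (a t)" "a (Suc t) = (a t)(i := b)"
      using r by auto
    moreover have "b \<in> {1..N}" using calculation by (simp add: lex_argmin_def)
    ultimately show ?thesis using upd_profiles[OF Suc i, of b] by metis
  qed
qed

lemma run_step:
  assumes "M \<ge> 1" "mapc_run M N sigma2 h gamma a"
    and gpos: "\<And>i. i \<in> {1..M} \<Longrightarrow> gamma i > 0"
    and i_def: "i = 1 + t mod M"
  shows "br_step M N sigma2 h gamma i (a t) (a (Suc t)) \<and>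
    (cost M sigma2 h gamma i (a (Suc t)) < cost M sigma2 h gamma i (a t) \<or>
     (pot M N gamma (a (Suc t)) \<le> pot M N gamma (a t) \<and>
      (a (Suc t) \<noteq> a t \<longrightarrow> pot M N gamma (a (Suc t)) < pot M N gamma (a t))))"
proof -
  have i: "i \<in> {1..M}" using assms(1) unfolding i_def
    by (simp add: Suc_leI)
  have prof: "a t \<in> profiles M N" using run_profiles[OF assms(1,2)] .
  then have ci: "a t i \<in> {1..N}" using i by (auto simp: profiles_def PiE_def)
  have r: "if a t i \<in> lex_argmin M N sigma2 h gamma i (a t) then a (Suc t) = a t
         else (\<exists>b\<in>lex_argmin M N sigma2 h gamma i (a t). a (Suc t) = (a t)(i := b))"
    using assms(2) unfolding mapc_run_def i_def Let_def by blast
  show ?thesis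
  proof (cases "a t i \<in> lex_argmin M N sigma2 h gamma i (a t)")
    case True
    then have "a (Suc t) = a t" using r by simp
    moreover have "br_step M N sigma2 h gamma i (a t) (a t)"
      unfolding br_step_def using i argmin_br[OF True] by (intro conjI exI[of _ "a t i"]) auto
    ultimately show ?thesis by simp
  next
    case False
    then obtain b where b: "b \<in> lex_argmin M N sigma2 h gamma i (a t)" and s: "a (Suc t) = (a t)(i := b)"
      using r by auto
    have br: "br_step M N sigma2 h gamma i (a t) (a (Suc t))"
      unfolding br_step_def using i argmin_br[OF b] s by blast
    define K where "K = mapc_key M sigma2 h gamma i (a t)"
    have triv: "(a t)(i := a t i) = a t" by simp
    have bN: "b \<in> {1..N}" using b by (simp add: lex_argmin_def)
    have le: "lex_le (K b) (K (a t i))" using b ci unfolding lex_argmin_def K_def by blast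
    obtain j' where j': "j' \<in> {1..N}" "\<not> lex_le (K (a t i)) (K j')"
      using False ci unfolding lex_argmin_def K_def by blast
    have lej: "lex_le (K b) (K j')" using b j' unfolding lex_argmin_def K_def by blast
    show ?thesis
    proof (cases "cost M sigma2 h gamma i (a (Suc t)) < cost M sigma2 h gamma i (a t)")
      case True then show ?thesis using br by simp
    next
      case nc: False
      have Kb: "K b = (cost M sigma2 h gamma i (a (Suc t)), load M gamma (a (Suc t)) b)"
        using s by (simp add: K_def mapc_key_def)
      have Kc: "K (a t i) = (cost M sigma2 h gamma i (a t), load M gamma (a t) (a t i))"
        by (simp add: K_def mapc_key_def)
      have eqc: "cost M sigma2 h gamma i (a (Suc t)) = cost M sigma2 h gamma i (a t)"
        and lle: "load M gamma (a (Suc t)) b \<le> load M gamma (a t) (a t i)"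
        using le nc Kb Kc by (auto simp: lex_le_def)
      have neq: "K b \<noteq> K (a t i)" using lej j' by auto
      then have lt: "load M gamma (a (Suc t)) b < load M gamma (a t) (a t i)"
        using Kb Kc eqc lle by auto
      have bc: "a t i \<noteq> b" using neq by auto
      have bpos: "beta gamma i > 0" using gpos[OF i] by (simp add: beta_def)
      have "pot M N gamma (a (Suc t)) < pot M N gamma (a t)"
        using pot_decr[of "a t" i "a t i" b M N gamma] bc i bN ci bpos lt s by simp
      then show ?thesis using br by simp
    qed
  qed
qed

lemma mono_interval:
  fixes f :: "nat \<Rightarrow> real"
  assumes "\<And>t. x \<le> t \<Longrightarrow> t < y \<Longrightarrow> f (Suc t) \<le> f t" "x \<le> y"
  shows "f y \<le> f x"
  using assms
proof (induction y)
  case 0 then show ?case by simp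
next
  case (Suc y)
  show ?case
  proof (cases "x \<le> y")
    case True then show ?thesis using Suc by (meson less_Suc_eq order_trans le_refl)
  next
    case False then have "x = Suc y" using Suc by simp
    then show ?thesis by simp
  qed
qed

theorem proposition3:
  fixes M N :: nat and sigma2 :: real and h :: "nat \<Rightarrow> nat \<Rightarrow> real"
    and gamma :: "nat \<Rightarrow> real" and a :: "nat \<Rightarrow> nat \<Rightarrow> nat"
  assumes "M \<ge> 1" and "N \<ge> 1"
    and "sigma2 > 0"
    and "\<And>i j. i \<in> {1..M} \<Longrightarrow> j \<in> {1..N} \<Longrightarrow> h i j > 0"
    and "\<And>i. i \<in> {1..M} \<Longrightarrow> gamma i > 0"
    and "\<not> has_br_cycle M N sigma2 h gamma"
    and "mapc_run M N sigma2 h gamma a"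
  shows "\<exists>T. \<forall>t\<ge>T. a t = a T"
proof (rule ccontr)
  assume nc: "\<not> ?thesis"
  have chg: "\<exists>s\<ge>T. a (Suc s) \<noteq> a s" for T
  proof (rule ccontr)
    assume "\<not> ?thesis"
    then have "\<forall>s\<ge>T. a (Suc s) = a s" by auto
    then have "a (T + n) = a T" for n by (induction n) auto
    then have "\<forall>t\<ge>T. a t = a T" by (metis le_add_diff_inverse)
    then show False using nc by blast
  qed
  have fin: "finite (a ` UNIV)"
    using run_profiles[OF assms(1,7)] finite_subset[of "a ` UNIV" "profiles M N"]
    by (auto simp: profiles_def finite_PiE)
  obtain p where "infinite (a -` {p} \<inter> UNIV)"
    using inf_img_fin_domE'[OF fin] by blast
  then have inf: "infinite {t. a t = p}" by (simp add: vimage_def)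
  then obtain t1 where t1: "a t1 = p" by (metis (mono_tags) empty_Collect_eq finite.emptyI)
  obtain s where s: "s \<ge> t1" "a (Suc s) \<noteq> a s" using chg by blast
  obtain t2 where t2: "t2 > s" "a t2 = p" using inf unfolding infinite_nat_iff_unbounded by blast
  define pl where "pl t = 1 + t mod M" for t
  have st: "br_step M N sigma2 h gamma (pl t) (a t) (a (Suc t)) \<and>
    (cost M sigma2 h gamma (pl t) (a (Suc t)) < cost M sigma2 h gamma (pl t) (a t) \<or>
     (pot M N gamma (a (Suc t)) \<le> pot M N gamma (a t) \<and>
      (a (Suc t) \<noteq> a t \<longrightarrow> pot M N gamma (a (Suc t)) < pot M N gamma (a t))))" for t
    using run_step[OF assms(1,7,5)] pl_def by blast
  show False
  proof (cases "\<exists>r. t1 \<le> r \<and> r < t2 \<and>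
      cost M sigma2 h gamma (pl r) (a (Suc r)) < cost M sigma2 h gamma (pl r) (a r)")
    case True
    then obtain r where r: "t1 \<le> r" "r < t2"
      "cost M sigma2 h gamma (pl r) (a (Suc r)) < cost M sigma2 h gamma (pl r) (a r)" by blast
    have "has_br_cycle M N sigma2 h gamma"
      unfolding has_br_cycle_def
      apply (rule exI[of _ "\<lambda>r. a (t1+r)"], rule exI[of _ "t2-t1"], rule exI[of _ "\<lambda>r. pl (t1+r)"])
    proof (intro conjI)
      show "1 \<le> t2 - t1" using s t2 by simp
      show "a (t1 + 0) \<in> profiles M N" using run_profiles[OF assms(1,7)] by simp
      show "a (t1 + (t2 - t1)) = a (t1 + 0)" using t1 t2 s by simp
      show "\<forall>r<t2 - t1. br_step M N sigma2 h gamma (pl (t1 + r))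
          (a (t1 + r)) (a (t1 + Suc r))"
        using st by simp
      show "\<exists>ra<t2 - t1. cost M sigma2 h gamma (pl (t1 + ra)) (a (t1 + Suc ra))
          < cost M sigma2 h gamma (pl (t1 + ra)) (a (t1 + ra))"
        using r by (intro exI[of _ "r - t1"]) auto
    qed
    then show False using assms(6) by blast
  next
    case False
    then have mono: "t1 \<le> t \<Longrightarrow> t < t2 \<Longrightarrow> pot M N gamma (a (Suc t)) \<le> pot M N gamma (a t)" for t
      using st by (meson not_less)
    have "pot M N gamma (a (Suc s)) < pot M N gamma (a s)"
      using st[of s] False s t2 by auto
    moreover have "pot M N gamma (a s) \<le> pot M N gamma (a t1)"
      using mono_interval[of t1 s "\<lambda>t. pot M N gamma (a t)"] mono s t2 by simp
    moreover have "pot M N gamma (a t2) \<le> pot M N gamma (a (Suc s))"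
      using mono_interval[of "Suc s" t2 "\<lambda>t. pot M N gamma (a t)"] mono s t2 by simp
    ultimately show False using t1 t2 by simp
  qed
qed

end
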